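(* Let $L$ be a finite field of characteristic $p$ and cardinality $q>2$. Let $s$ be a positive integer with $s\equiv 1\pmod{p-1}$ and $\gcd(s,q-1)=1$, and let $f\colon L\to L$ be the power function $f(x)=x^s$. Then $\mathfrak{D}(f)\equiv 0\pmod 3$.
   Context: Let $\mu$ be the canonical additive character of $L$, $\mu(x)=\exp(2i\pi\,\mathrm{Tr}(x)/p)$, where $\mathrm{Tr}$ is the trace of $L/\mathbb{F}_p$. The Fourier coefficient of $f$ at $a\in L$ is $\widehat{f}(a)=\sum_{x\in L}\mu(ax+f(x))$; under the hypothesis $s\equiv 1\pmod{p-1}$ these are rational integers. Define $\mathfrak{D}(f)=\prod_{a\in L^{\times}}\widehat{f}(a)$. *)

theory Defs
  imports "HOL-Analysis.Analysis" "HOL-Number_Theory.Number_Theory"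
begin

text \<open>Finite fields are types of class field and finite; p = CHAR('a), q = CARD('a) = p^n.\<close>

definition ff_degree :: "'a::{field,finite} itself \<Rightarrow> nat" where
  "ff_degree _ = (THE n. CARD('a) = CHAR('a) ^ n)"

definition ff_trace :: "'a::{field,finite} \<Rightarrow> 'a" where
  "ff_trace x = (\<Sum>i<ff_degree TYPE('a). x ^ (CHAR('a) ^ i))"

definition ff_trace_nat :: "'a::{field,finite} \<Rightarrow> nat" where
  "ff_trace_nat x = (THE k. k < CHAR('a) \<and> of_nat k = ff_trace x)"

definition can_char :: "'a::{field,finite} \<Rightarrow> complex" where
  "can_char x = exp (2 * pi * \<i> * of_nat (ff_trace_nat x) / of_nat CHAR('a))"

definition fourier_coeff :: "('a::{field,finite} \<Rightarrow> 'a) \<Rightarrow> 'a \<Rightarrow> complex" where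
  "fourier_coeff f a = (\<Sum>x\<in>UNIV. can_char (a * x + f x))"

definition frakD :: "('a::{field,finite} \<Rightarrow> 'a) \<Rightarrow> complex" where
  "frakD f = (\<Prod>a\<in>UNIV - {0}. fourier_coeff f a)"

end

theory Submission
  imports Defs
begin

lemma ff_char_prime: "prime CHAR('a::{field,finite})"
  by (intro prime_CHAR_semidom finite_imp_CHAR_pos) simp

lemma ff_char_gt1: "CHAR('a::{field,finite}) > 1"
  using ff_char_prime[where 'a='a] prime_gt_1_nat by blast

lemma ff_of_nat_mod: "(of_nat (m mod CHAR('a)) :: 'a::{field,finite}) = of_nat m"
proof -
  have "m = CHAR('a) * (m div CHAR('a)) + m mod CHAR('a)" by simp
  hence "(of_nat m :: 'a) = of_nat (CHAR('a) * (m div CHAR('a))) + of_nat (m mod CHAR('a))"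
    by (metis of_nat_add)
  thus ?thesis by simp
qed

lemma ff_of_nat_inj:
  assumes "a < CHAR('a::{field,finite})" "b < CHAR('a)" "(of_nat a :: 'a) = of_nat b"
  shows "a = b"
proof (rule ccontr)
  assume "a \<noteq> b"
  then consider "a < b" | "b < a" by linarith
  thus False
  proof cases
    case 1
    hence "CHAR('a) dvd (b - a)" using assms(3) of_nat_eq_iff_char_dvd[of a b, where 'a='a] by simp
    moreover have "0 < b - a" "b - a < CHAR('a)" using 1 assms by auto
    ultimately show False using nat_dvd_not_less by blast
  next
    case 2
    hence "CHAR('a) dvd (a - b)" using assms(3) of_nat_eq_iff_char_dvd[of b a, where 'a='a] by simp
    moreover have "0 < a - b" "a - b < CHAR('a)" using 2 assms by auto
    ultimately show False using nat_dvd_not_less by blast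
  qed
qed

lemma ff_of_nat_eq_iff: "(of_nat a :: 'a::{field,finite}) = of_nat b \<longleftrightarrow> a mod CHAR('a) = b mod CHAR('a)"
proof
  assume "(of_nat a :: 'a) = of_nat b"
  hence "(of_nat (a mod CHAR('a)) :: 'a) = of_nat (b mod CHAR('a))" by (simp add: ff_of_nat_mod)
  thus "a mod CHAR('a) = b mod CHAR('a)"
    using ff_of_nat_inj[where 'a='a, of "a mod CHAR('a)" "b mod CHAR('a)"] ff_char_gt1[where 'a='a] by auto
next
  assume "a mod CHAR('a) = b mod CHAR('a)"
  thus "(of_nat a :: 'a) = of_nat b" by (metis ff_of_nat_mod)
qed

lemma ff_power_card: "(x::'a::{field,finite}) ^ CARD('a) = x"
proof (cases "x = 0")
  case False
  have "x * (\<Prod>y\<in>UNIV-{0}. x * y) = x * x ^ (CARD('a) - 1) * \<Prod>(UNIV-{0::'a})"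
    by (simp add: prod.distrib mult_ac)
  also have "x * x ^ (CARD('a) - 1) = x ^ Suc (CARD('a) - 1)"
    by (subst power_Suc) auto
  also have "Suc (CARD('a) - 1) = CARD('a)"
    using finite_UNIV_card_ge_0[where ?'a = 'a] by simp
  also have "(\<Prod>y\<in>UNIV-{0}. x * y) = (\<Prod>y\<in>UNIV-{0}. y)"
    by (rule prod.reindex_bij_witness[of _ "\<lambda>y. y / x" "\<lambda>y. x * y"]) (use False in auto)
  finally show ?thesis
    by simp
qed (use finite_UNIV_card_ge_0[where ?'a = 'a] in auto)

lemma ff_power_card_pow: "(x::'a::{field,finite}) ^ (CARD('a) ^ n) = x"
  by (induction n) (simp_all add: ff_power_card power_mult)


definition subsp :: "'a::{field,finite} set \<Rightarrow> bool" where
  "subsp U \<longleftrightarrow> 0 \<in> U \<and> (\<forall>x\<in>U. \<forall>y\<in>U. x+y \<in> U) \<and> (\<forall>x\<in>U. \<forall>j. of_nat j * x \<in> U)"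

lemma ff_inv_nat:
  assumes "\<not> CHAR('a::{field,finite}) dvd d"
  shows "\<exists>e. (of_nat e :: 'a) * of_nat d = 1"
proof -
  have "coprime CHAR('a) d" using prime_imp_coprime[OF ff_char_prime[where 'a='a] assms] .
  hence "coprime d CHAR('a)" by (simp add: coprime_commute)
  then obtain e where "[d * e = Suc 0] (mod CHAR('a))" using cong_solve_coprime_nat by blast
  hence "(of_nat (d*e) :: 'a) = of_nat (Suc 0)" by (subst ff_of_nat_eq_iff) (simp add: cong_def)
  thus ?thesis by (intro exI[of _ e]) (simp add: mult.commute)
qed

lemma ff_of_nat_pm1: "(of_nat (CHAR('a) - 1) :: 'a::{field,finite}) = -1"
proof -
  have "(of_nat (CHAR('a) - 1) :: 'a) + 1 = of_nat (CHAR('a) - 1 + 1)" by simp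
  also have "CHAR('a) - 1 + 1 = CHAR('a)" using ff_char_gt1[where 'a='a] by simp
  finally show ?thesis by (simp add: eq_neg_iff_add_eq_0)
qed

lemma subsp_neg: "subsp U \<Longrightarrow> u \<in> U \<Longrightarrow> -u \<in> (U::'a::{field,finite} set)"
  unfolding subsp_def using ff_of_nat_pm1[where 'a='a] by (metis mult_minus1)

lemma subsp_extend:
  fixes x :: "'a::{field,finite}"
  assumes U: "subsp U" and x: "x \<notin> U"
  defines "U' \<equiv> (\<lambda>(u,j). u + of_nat j * x) ` (U \<times> {..<CHAR('a)})"
  shows "subsp U' \<and> card U' = CHAR('a) * card U"
proof -
  let ?p = "CHAR('a)"
  have p1: "?p > 1" using ff_char_gt1[where 'a='a] .
  have sU: "0 \<in> U" "\<And>a b. a \<in> U \<Longrightarrow> b \<in> U \<Longrightarrow> a + b \<in> U" "\<And>a j. a \<in> U \<Longrightarrow> of_nat j * a \<in> U"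
    using U unfolding subsp_def by auto
  have mem: "u + of_nat j * x \<in> U'" if "u \<in> U" for u j
  proof -
    have "u + of_nat j * x = u + of_nat (j mod ?p) * x" by (simp add: ff_of_nat_mod)
    moreover have "j mod ?p < ?p" using p1 by simp
    ultimately show ?thesis unfolding U'_def using that by (auto intro!: image_eqI[of _ _ "(u, j mod ?p)"])
  qed
  have "subsp U'"
    unfolding subsp_def
  proof (intro conjI ballI allI)
    show "0 \<in> U'" using mem[OF sU(1), of 0] by simp
  next
    fix a b assume "a \<in> U'" "b \<in> U'"
    then obtain u1 j1 u2 j2 where "u1 \<in> U" "u2 \<in> U" "a = u1 + of_nat j1 * x" "b = u2 + of_nat j2 * x"
      unfolding U'_def by auto
    hence "a + b = (u1 + u2) + of_nat (j1 + j2) * x" by (simp add: algebra_simps)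
    thus "a + b \<in> U'" using mem[OF sU(2)[OF \<open>u1 \<in> U\<close> \<open>u2 \<in> U\<close>], of "j1+j2"] by simp
  next
    fix a c assume "a \<in> U'"
    then obtain u1 j1 where "u1 \<in> U" "a = u1 + of_nat j1 * x"
      unfolding U'_def by auto
    hence eq: "of_nat c * a = of_nat c * u1 + of_nat (c * j1) * x" by (simp add: algebra_simps)
    have "of_nat c * u1 + of_nat (c * j1) * x \<in> U'" by (rule mem, rule sU(3), fact)
    thus "of_nat c * a \<in> U'" by (simp only: eq)
  qed
  have key: "u1 + of_nat j1 * x \<noteq> u2 + of_nat j2 * x"
    if "u1 \<in> U" "u2 \<in> U" "j1 < j2" "j2 < ?p" for u1 u2 j1 j2
  proof
    assume eq: "u1 + of_nat j1 * x = u2 + of_nat j2 * x"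
    have "(of_nat j2 :: 'a) = of_nat j1 + of_nat (j2 - j1)" using that(3) by (simp flip: of_nat_add)
    with eq have "u1 + (-u2) = of_nat (j2 - j1) * x" by (simp add: algebra_simps)
    moreover have "\<not> ?p dvd (j2 - j1)" using that(3,4) by (auto dest: dvd_imp_le)
    then obtain e where e: "(of_nat e :: 'a) * of_nat (j2 - j1) = 1" using ff_inv_nat by blast
    ultimately have "of_nat e * (u1 + (-u2)) = x" by (simp flip: mult.assoc)
    moreover have "of_nat e * (u1 + (-u2)) \<in> U" using sU subsp_neg[OF U] that by blast
    ultimately show False using x by simp
  qed
  have inj: "inj_on (\<lambda>(u,j). u + of_nat j * x) (U \<times> {..<?p})"
  proof (rule inj_onI, clarify)
    fix u1 j1 u2 j2 assume h: "u1 \<in> U" "j1 < ?p" "u2 \<in> U" "j2 < ?p"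
      "u1 + of_nat j1 * x = u2 + of_nat j2 * x"
    have "j1 = j2"
    proof (rule linorder_cases[of j1 j2])
      assume "j1 < j2" thus ?thesis using key h by blast
    next
      assume "j2 < j1" thus ?thesis using key h by metis
    qed
    thus "u1 = u2 \<and> j1 = j2" using h(5) by simp
  qed
  have "card U' = card (U \<times> {..<?p})" unfolding U'_def using inj by (rule card_image)
  also have "\<dots> = ?p * card U" by (simp add: card_cartesian_product)
  finally show ?thesis using \<open>subsp U'\<close> by simp
qed

lemma subsp_card_aux:
  assumes "subsp (U :: 'a::{field,finite} set)" "card U = CHAR('a) ^ k"
  shows "\<exists>n. CARD('a) = CHAR('a) ^ n"
  using assms
proof (induction "CARD('a) - card U" arbitrary: U k rule: less_induct)
  case less
  show ?case
  proof (cases "U = UNIV")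
    case True thus ?thesis using less.prems by auto
  next
    case False
    then obtain x where x: "x \<notin> U" by auto
    define U' where "U' = (\<lambda>(u,j). u + of_nat j * x) ` (U \<times> {..<CHAR('a)})"
    have h: "subsp U' \<and> card U' = CHAR('a) * card U" using subsp_extend[OF less.prems(1) x] U'_def by simp
    have "card U > 0" using less.prems ff_char_gt1[where 'a='a] by simp
    hence "card U < card U'" using h ff_char_gt1[where 'a='a] by simp
    moreover have "card U' \<le> CARD('a)" by (rule card_mono) auto
    ultimately have "CARD('a) - card U' < CARD('a) - card U" by linarith
    moreover have "card U' = CHAR('a) ^ Suc k" using h less.prems by simp
    ultimately show ?thesis using less.hyps h by blast
  qed
qed

lemma ff_card_pow: "\<exists>n. CARD('a::{field,finite}) = CHAR('a) ^ n"
proof (rule subsp_card_aux)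
  show "subsp {0::'a}" unfolding subsp_def by simp
  show "card {0::'a} = CHAR('a) ^ 0" by simp
qed

lemma ff_degree_eq: "CARD('a::{field,finite}) = CHAR('a) ^ ff_degree TYPE('a)"
proof -
  obtain n where n: "CARD('a) = CHAR('a) ^ n" using ff_card_pow by blast
  have "ff_degree TYPE('a) = n"
    unfolding ff_degree_def
  proof (rule the_equality)
    fix m assume "CARD('a) = CHAR('a) ^ m"
    with n show "m = n" using ff_char_gt1[where 'a='a] power_inject_exp by metis
  qed (rule n)
  thus ?thesis using n by simp
qed

lemma ff_degree_pos: "ff_degree TYPE('a::{field,finite}) > 0"
proof (rule ccontr)
  assume "\<not> ?thesis"
  hence "CARD('a) = 1" using ff_degree_eq[where 'a='a] by simp
  moreover have "{0::'a, 1} \<subseteq> UNIV" by simp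
  hence "card {0::'a,1} \<le> CARD('a)" by (intro card_mono) auto
  ultimately show False by simp
qed


lemma roots_bound:
  fixes P :: "'a::field poly"
  assumes "Polynomial.coeff P m \<noteq> 0" "\<And>i. i > m \<Longrightarrow> Polynomial.coeff P i = 0"
  shows "card {x. poly P x = 0} \<le> m"
proof -
  have "P \<noteq> 0" using assms(1) by auto
  hence "card {x. poly P x = 0} \<le> Polynomial.degree P" by (rule card_poly_roots_bound)
  also have "Polynomial.degree P \<le> m" using assms(2) by (intro degree_le) auto
  finally show ?thesis .
qed

lemma ff_frob_add: "((x::'a::{field,finite}) + y) ^ CHAR('a) = x ^ CHAR('a) + y ^ CHAR('a)"
  using freshmans_dream[where 'a='a, OF ff_char_prime refl] .

lemma ff_frob_sum: "(sum (f :: _ \<Rightarrow> 'a::{field,finite}) A) ^ CHAR('a) = (\<Sum>i\<in>A. f i ^ CHAR('a))"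
  using freshmans_dream_sum[where 'a='a, OF ff_char_prime refl] .

lemma ff_frob_add': "((x::'a::{field,finite}) + y) ^ (CHAR('a) ^ k) = x ^ (CHAR('a)^k) + y ^ (CHAR('a)^k)"
  using freshmans_dream'[where 'a='a, OF ff_char_prime refl] .

lemma ff_of_nat_pow: "(of_nat j :: 'a::{field,finite}) ^ CHAR('a) = of_nat j"
proof (induction j)
  case 0 thus ?case using ff_char_gt1[where 'a='a] by simp
next
  case (Suc j)
  have "(of_nat (Suc j) :: 'a) ^ CHAR('a) = (of_nat j + 1) ^ CHAR('a)" by (metis add.commute of_nat_Suc)
  also have "\<dots> = of_nat j ^ CHAR('a) + 1 ^ CHAR('a)" by (rule ff_frob_add)
  finally show ?case using Suc by simp
qed

lemma ff_pow_iter: "(c::'a::{field,finite}) ^ CHAR('a) = c \<Longrightarrow> c ^ (CHAR('a) ^ k) = c"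
  by (induction k) (simp_all add: power_mult)

lemma ff_frob_fixed:
  assumes "(y::'a::{field,finite}) ^ CHAR('a) = y"
  shows "\<exists>j<CHAR('a). y = of_nat j"
proof -
  let ?p = "CHAR('a)"
  have p1: "?p > 1" using ff_char_gt1[where 'a='a] .
  define P :: "'a poly" where "P = Polynomial.monom 1 ?p - Polynomial.monom 1 1"
  have "Polynomial.coeff P ?p \<noteq> 0" using p1 unfolding P_def by simp
  moreover have "\<And>i. i > ?p \<Longrightarrow> Polynomial.coeff P i = 0" using p1 unfolding P_def by simp
  ultimately have cb: "card {x. poly P x = 0} \<le> ?p" by (rule roots_bound)
  have sub: "(\<lambda>j. of_nat j :: 'a) ` {..<?p} \<subseteq> {x. poly P x = 0}"
    by (auto simp: P_def poly_monom ff_of_nat_pow)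
  have inj: "inj_on (\<lambda>j. of_nat j :: 'a) {..<?p}"
    by (rule inj_onI) (use ff_of_nat_inj[where 'a='a] in auto)
  have "card ((\<lambda>j. of_nat j :: 'a) ` {..<?p}) = ?p" using card_image[OF inj] by simp
  hence eq: "(\<lambda>j. of_nat j :: 'a) ` {..<?p} = {x. poly P x = 0}"
    using card_subset_eq[OF _ sub] cb by (metis finite le_antisym card_mono sub)
  have "y \<in> {x. poly P x = 0}" using assms by (simp add: P_def poly_monom)
  with eq show ?thesis by auto
qed


lemma ff_trace_add: "ff_trace ((x::'a::{field,finite}) + y) = ff_trace x + ff_trace y"
  unfolding ff_trace_def by (simp add: ff_frob_add' sum.distrib)

lemma ff_trace_frob: "ff_trace (x::'a::{field,finite}) ^ CHAR('a) = ff_trace x"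
proof -
  let ?p = "CHAR('a)" and ?n = "ff_degree TYPE('a)"
  define f where "f i = x ^ (?p ^ i)" for i
  have "ff_trace x ^ ?p = (\<Sum>i<?n. f i ^ ?p)" unfolding ff_trace_def f_def by (rule ff_frob_sum)
  also have "\<dots> = (\<Sum>i<?n. f (Suc i))" unfolding f_def by (intro sum.cong refl) (metis power_mult power_Suc2)
  also have "(\<Sum>i<Suc ?n. f i) = f 0 + (\<Sum>i<?n. f (Suc i))" by (rule sum.lessThan_Suc_shift)
  hence "(\<Sum>i<?n. f (Suc i)) = (\<Sum>i<?n. f i) + f ?n - f 0" by simp
  also have "f ?n = x" unfolding f_def using ff_degree_eq[where 'a='a] ff_power_card[of x] by simp
  also have "f 0 = x" by (simp add: f_def)
  finally show ?thesis unfolding ff_trace_def f_def by simp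
qed

lemma ff_trace_scal:
  assumes "(c::'a::{field,finite}) ^ CHAR('a) = c"
  shows "ff_trace (c * x) = c * ff_trace x"
  unfolding ff_trace_def by (simp add: power_mult_distrib ff_pow_iter[OF assms] sum_distrib_left)

lemma ff_trace_nat_ex: "\<exists>!k. k < CHAR('a) \<and> of_nat k = ff_trace (x::'a::{field,finite})"
proof -
  obtain j where "j < CHAR('a)" "ff_trace x = of_nat j" using ff_frob_fixed[OF ff_trace_frob[of x]] by blast
  thus ?thesis using ff_of_nat_inj[where 'a='a] by metis
qed

lemma ff_trace_nat: "ff_trace_nat (x::'a::{field,finite}) < CHAR('a)"
   "of_nat (ff_trace_nat x) = ff_trace x"
  using theI'[OF ff_trace_nat_ex[of x]] unfolding ff_trace_nat_def by auto

lemma ff_trace_nat_eqI: "k < CHAR('a) \<Longrightarrow> of_nat k = ff_trace (x::'a::{field,finite}) \<Longrightarrow> ff_trace_nat x = k"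
  using ff_trace_nat_ex[of x] ff_trace_nat[of x] by metis

lemma ff_trace_nat_add: "ff_trace_nat ((x::'a::{field,finite}) + y) = (ff_trace_nat x + ff_trace_nat y) mod CHAR('a)"
  by (rule ff_trace_nat_eqI) (use ff_char_gt1[where 'a='a] in \<open>simp_all add: ff_of_nat_mod ff_trace_nat ff_trace_add\<close>)

lemma ff_trace_nat_scal: "ff_trace_nat ((of_nat j :: 'a::{field,finite}) * x) = (j * ff_trace_nat x) mod CHAR('a)"
  by (rule ff_trace_nat_eqI) (use ff_char_gt1[where 'a='a] in \<open>simp_all add: ff_of_nat_mod ff_trace_nat ff_trace_scal ff_of_nat_pow\<close>)

lemma ff_trace_nonzero: "\<exists>x::'a::{field,finite}. ff_trace x \<noteq> 0"
proof (rule ccontr)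
  assume "\<not> ?thesis"
  hence all0: "\<And>x::'a. ff_trace x = 0" by blast
  let ?p = "CHAR('a)" and ?n = "ff_degree TYPE('a)"
  have n0: "?n > 0" by (rule ff_degree_pos)
  have p1: "?p > 1" using ff_char_gt1[where 'a='a] .
  define P :: "'a poly" where "P = (\<Sum>i<?n. Polynomial.monom 1 (?p ^ i))"
  have cP: "Polynomial.coeff P m = (\<Sum>i<?n. if ?p ^ i = m then 1 else 0)" for m
    unfolding P_def coeff_sum by simp
  have "Polynomial.coeff P (?p ^ (?n - 1)) = (\<Sum>i\<in>{?n - 1}. 1)"
    unfolding cP by (rule sum.mono_neutral_cong_right) (use n0 p1 power_inject_exp in auto)
  hence c1: "Polynomial.coeff P (?p ^ (?n - 1)) \<noteq> 0" by simp
  have c2: "Polynomial.coeff P i = 0" if "i > ?p ^ (?n - 1)" for i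
  proof -
    have "?p ^ j < i" if "j < ?n" for j
    proof -
      have "?p ^ j \<le> ?p ^ (?n - 1)" using that p1 by (intro power_increasing) auto
      thus ?thesis using \<open>i > _\<close> by linarith
    qed
    thus ?thesis unfolding cP by (intro sum.neutral) auto
  qed
  have "card {x. poly P x = 0} \<le> ?p ^ (?n - 1)" by (rule roots_bound[OF c1 c2])
  moreover have "{x. poly P x = 0} = UNIV"
    using all0 by (auto simp: P_def poly_sum poly_monom ff_trace_def)
  moreover have "?p ^ (?n - 1) < ?p ^ ?n" using n0 p1 by (intro power_strict_increasing) auto
  ultimately show False using ff_degree_eq[where 'a='a] by simp
qed


definition zz :: "nat \<Rightarrow> complex" where "zz p = exp (2 * of_real pi * \<i> / of_nat p)"

lemma zz_pow_p: "p > 0 \<Longrightarrow> zz p ^ p = 1"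
  unfolding zz_def by (simp flip: exp_of_nat_mult)

lemma zz_pow_mod: "p > 0 \<Longrightarrow> zz p ^ (a mod p) = zz p ^ a"
proof -
  assume "p > 0"
  have "zz p ^ a = zz p ^ (p * (a div p) + a mod p)" by simp
  also have "\<dots> = (zz p ^ p) ^ (a div p) * zz p ^ (a mod p)" by (simp only: power_add power_mult)
  finally show ?thesis using zz_pow_p[OF \<open>p > 0\<close>] by simp
qed

lemma zz_pow_ne1:
  assumes "0 < k" "k < p"
  shows "zz p ^ k \<noteq> 1"
proof
  assume "zz p ^ k = 1"
  hence "exp (of_nat k * (2 * of_real pi * \<i> / of_nat p)) = 1" unfolding zz_def by (simp flip: exp_of_nat_mult)
  then obtain n :: int where n: "Im (of_nat k * (2 * of_real pi * \<i> / of_nat p)) = of_int (2 * n) * pi"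
    unfolding exp_eq_1 by blast
  have "Im (of_nat k * (2 * of_real pi * \<i> / of_nat p)) = 2 * pi * k / p" by simp
  with n have "2 * pi * k / p = 2 * n * pi" by simp
  hence "real k = real p * n" using assms pi_gt_zero by (simp add: field_simps)
  hence "int k = int p * n" by (metis of_int_eq_iff of_int_mult of_int_of_nat_eq)
  hence "int p dvd int k" by simp
  hence "p dvd k" by simp
  thus False using assms by (auto dest: dvd_imp_le)
qed

lemma zz_sum: "p > 1 \<Longrightarrow> (\<Sum>j<p. zz p ^ j) = 0"
  using zz_pow_ne1[of 1 p] zz_pow_p[of p] by (simp add: sum_gp_strict)

lemma can_char_zz: "can_char (x::'a::{field,finite}) = zz CHAR('a) ^ ff_trace_nat x"
proof -
  have "can_char x = exp (of_nat (ff_trace_nat x) * (2 * of_real pi * \<i> / of_nat CHAR('a)))"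
    unfolding can_char_def by (simp add: field_simps)
  thus ?thesis unfolding zz_def by (simp only: exp_of_nat_mult)
qed

lemma can_char_add: "can_char ((x::'a::{field,finite}) + y) = can_char x * can_char y"
  unfolding can_char_zz ff_trace_nat_add using ff_char_gt1[where 'a='a]
  by (simp add: zz_pow_mod power_add)

lemma ff_trace_nat_0: "ff_trace_nat (0::'a::{field,finite}) = 0"
  by (rule ff_trace_nat_eqI) (use ff_char_gt1[where 'a='a] in \<open>simp_all add: ff_trace_def power_0_left\<close>)

lemma can_char_0: "can_char (0::'a::{field,finite}) = 1"
  unfolding can_char_zz ff_trace_nat_0 by simp

lemma sum_inj_UNIV:
  fixes h :: "'a::{field,finite} \<Rightarrow> 'a" and g :: "'a \<Rightarrow> complex"
  assumes "inj h"
  shows "(\<Sum>x\<in>UNIV. g (h x)) = (\<Sum>x\<in>UNIV. g x)"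
proof -
  have "surj h" using finite_UNIV_inj_surj[OF _ assms] by simp
  hence "(\<Sum>x\<in>UNIV. g x) = (\<Sum>x\<in>h ` UNIV. g x)" by simp
  also have "\<dots> = (\<Sum>x\<in>UNIV. g (h x))" using sum.reindex[OF assms, of g] by simp
  finally show ?thesis by simp
qed

lemma can_char_sum: "(\<Sum>x\<in>UNIV. can_char (x::'a::{field,finite})) = 0"
proof -
  obtain x0 :: 'a where x0: "ff_trace x0 \<noteq> 0" using ff_trace_nonzero by blast
  have "ff_trace_nat x0 \<noteq> 0" using x0 ff_trace_nat(2)[of x0] by (metis of_nat_0)
  hence "0 < ff_trace_nat x0" by simp
  hence ne: "can_char x0 \<noteq> 1" unfolding can_char_zz using zz_pow_ne1 ff_trace_nat(1)[of x0] by blast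
  have "(\<Sum>x\<in>UNIV. can_char (x + x0)) = (\<Sum>x\<in>UNIV. can_char (x::'a))"
    by (rule sum_inj_UNIV) (simp add: inj_def)
  hence "(\<Sum>x\<in>UNIV. can_char (x::'a)) = (\<Sum>x\<in>UNIV. can_char (x + x0))" by simp
  also have "\<dots> = can_char x0 * (\<Sum>x\<in>UNIV. can_char (x::'a))" by (simp add: can_char_add sum_distrib_left mult.commute)
  finally have "(1 - can_char x0) * (\<Sum>x\<in>UNIV. can_char (x::'a)) = 0" by (simp add: algebra_simps)
  thus ?thesis using ne by simp
qed

lemma can_char_orth: "(\<Sum>x\<in>UNIV. can_char ((a::'a::{field,finite}) * x)) = (if a = 0 then of_nat CARD('a) else 0)"
proof (cases "a = 0")
  case True thus ?thesis by (simp add: can_char_0)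
next
  case False
  have "(\<Sum>x\<in>UNIV. can_char (a * x)) = (\<Sum>x\<in>UNIV. can_char (x::'a))"
    by (rule sum_inj_UNIV) (use False in \<open>simp add: inj_def\<close>)
  thus ?thesis using False can_char_sum by simp
qed

lemma pf_pow_s:
  fixes c :: "'a::{field,finite}"
  assumes "c ^ CHAR('a) = c" "s > 0" "[s = 1] (mod (CHAR('a) - 1))"
  shows "c ^ s = c"
proof (cases "c = 0")
  case True thus ?thesis using assms by simp
next
  case False
  have "(CHAR('a) - 1) dvd (s - 1)" using assms(2,3) by (simp add: cong_altdef_nat)
  then obtain m where m: "s - 1 = (CHAR('a) - 1) * m" by blast
  have "c ^ (CHAR('a) - 1) = 1"
  proof -
    have "c * c ^ (CHAR('a) - 1) = c ^ Suc (CHAR('a) - 1)" by simp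
    also have "Suc (CHAR('a) - 1) = CHAR('a)" using ff_char_gt1[where 'a='a] by simp
    finally show ?thesis using assms(1) False by simp
  qed
  have "c ^ s = c ^ Suc (s - 1)" using assms(2) by simp
  also have "\<dots> = c * (c ^ (CHAR('a) - 1)) ^ m" by (simp only: power_Suc m power_mult)
  finally show ?thesis using \<open>c ^ (CHAR('a) - 1) = 1\<close> by simp
qed

lemma neg1_pow_s:
  assumes "s > 0" "[s = 1] (mod (CHAR('a) - 1))"
  shows "(-1 :: 'a::{field,finite}) ^ s = -1"
proof -
  have "(of_nat (CHAR('a)-1) :: 'a) ^ s = of_nat (CHAR('a) - 1)" by (rule pf_pow_s[OF ff_of_nat_pow assms])
  thus ?thesis using ff_of_nat_pm1[where 'a='a] by simp
qed


lemma sum_by_value: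
  fixes k :: "'a::finite \<Rightarrow> nat" and F :: "nat \<Rightarrow> 'b::comm_ring_1"
  assumes "\<And>x. k x < P"
  shows "(\<Sum>x\<in>UNIV. F (k x)) = (\<Sum>j<P. of_nat (card {x. k x = j}) * F j)"
proof -
  have "(\<Sum>x\<in>UNIV. F (k x)) = (\<Sum>j<P. \<Sum>x\<in>{x. x \<in> UNIV \<and> k x = j}. F (k x))"
    by (rule sum.group[symmetric]) (use assms in auto)
  also have "\<dots> = (\<Sum>j<P. of_nat (card {x. k x = j}) * F j)"
    by (intro sum.cong refl) simp
  finally show ?thesis .
qed

locale pow_setup =
  fixes s :: nat and TY :: "'a::{field,finite} itself"
  assumes s_pos: "s > 0" and s_cong: "[s = 1] (mod (CHAR('a) - 1))"
begin

lemma g_scal: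
  assumes "0 < j" "j < CHAR('a)"
  shows "ff_trace_nat (b * (of_nat j * x) + (of_nat j * x) ^ s) = (j * ff_trace_nat (b * x + x ^ s :: 'a)) mod CHAR('a)"
proof -
  have "(of_nat j :: 'a) ^ s = of_nat j" by (rule pf_pow_s[OF ff_of_nat_pow s_pos s_cong])
  hence "b * (of_nat j * x) + (of_nat j * x) ^ s = of_nat j * (b * x + x ^ s :: 'a)"
    by (simp add: power_mult_distrib algebra_simps)
  thus ?thesis by (simp add: ff_trace_nat_scal)
qed

lemma N_eq:
  fixes b :: 'a
  assumes "0 < j" "j < CHAR('a)"
  shows "card {x::'a. ff_trace_nat (b*x + x^s) = j} = card {x::'a. ff_trace_nat (b*x + x^s) = 1}"
proof -
  let ?p = "CHAR('a)"
  let ?c = "of_nat j :: 'a"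
  have p1: "?p > 1" using ff_char_gt1[where 'a='a] .
  have c0: "?c \<noteq> 0"
  proof
    assume "?c = 0"
    hence "(of_nat j :: 'a) = of_nat 0" by simp
    thus False using ff_of_nat_inj[where 'a='a, of j 0] assms by simp
  qed
  have key: "ff_trace_nat (b * (?c * x) + (?c * x) ^ s) = j \<longleftrightarrow> ff_trace_nat (b*x + x^s) = 1" for x
  proof -
    let ?k = "ff_trace_nat (b*x + x^s)"
    have k: "?k < ?p" by (rule ff_trace_nat)
    have "(j * ?k) mod ?p = j \<longleftrightarrow> ?k = 1"
    proof
      assume h: "(j * ?k) mod ?p = j"
      hence "(of_nat (j * ?k) :: 'a) = of_nat j" using assms by (subst ff_of_nat_eq_iff) simp
      hence "?c * of_nat ?k = ?c * 1" by simp
      hence "(of_nat ?k :: 'a) = of_nat 1" using c0 by simp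
      thus "?k = 1" using ff_of_nat_inj[where 'a='a, of ?k 1] k p1 by simp
    next
      assume "?k = 1" thus "(j * ?k) mod ?p = j" using assms by simp
    qed
    thus ?thesis using g_scal[OF assms, of b x] by simp
  qed
  have "bij_betw (\<lambda>x. ?c * x) {x::'a. ff_trace_nat (b*x + x^s) = 1} {x::'a. ff_trace_nat (b*x + x^s) = j}"
  proof (rule bij_betw_byWitness[of _ "\<lambda>y. y / ?c"])
    show "\<forall>a\<in>{x::'a. ff_trace_nat (b*x + x^s) = 1}. ?c * a / ?c = a" using c0 by simp
    show "\<forall>a\<in>{x::'a. ff_trace_nat (b*x + x^s) = j}. ?c * (a / ?c) = a" using c0 by simp
    show "(\<lambda>x. ?c * x) ` {x::'a. ff_trace_nat (b*x + x^s) = 1} \<subseteq> {x::'a. ff_trace_nat (b*x + x^s) = j}"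
      using key by auto
    show "(\<lambda>y. y / ?c) ` {x::'a. ff_trace_nat (b*x + x^s) = j} \<subseteq> {x::'a. ff_trace_nat (b*x + x^s) = 1}"
    proof
      fix z assume "z \<in> (\<lambda>y. y / ?c) ` {x::'a. ff_trace_nat (b*x + x^s) = j}"
      then obtain y where y: "z = y / ?c" "ff_trace_nat (b*y + y^s) = j" by blast
      have "y = ?c * z" using y(1) c0 by simp
      thus "z \<in> {x::'a. ff_trace_nat (b*x + x^s) = 1}" using key[of z] y(2) by simp
    qed
  qed
  hence "card {x::'a. ff_trace_nat (b*x + x^s) = 1} = card {x::'a. ff_trace_nat (b*x + x^s) = j}"
    by (rule bij_betw_same_card)
  thus ?thesis by simp
qed

definition NN :: "'a \<Rightarrow> nat \<Rightarrow> nat" where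
  "NN b j = card {x::'a. ff_trace_nat (b*x + x^s) = j}"

lemma W_int: "fourier_coeff (\<lambda>x. x ^ s) b = of_int (int (NN b 0) - int (NN b 1))"
proof -
  let ?p = "CHAR('a)"
  have p1: "?p > 1" using ff_char_gt1[where 'a='a] .
  let ?z = "zz ?p"
  have "fourier_coeff (\<lambda>x. x ^ s) b = (\<Sum>x\<in>UNIV. ?z ^ ff_trace_nat (b*x + x^s))"
    unfolding fourier_coeff_def can_char_zz ..
  also have "\<dots> = (\<Sum>j<?p. of_nat (NN b j) * ?z ^ j)"
    unfolding NN_def by (rule sum_by_value) (rule ff_trace_nat)
  also have "\<dots> = (\<Sum>j<Suc (?p - 1). of_nat (NN b j) * ?z ^ j)" using p1 by (simp del: sum.lessThan_Suc)
  also have "\<dots> = of_nat (NN b 0) + (\<Sum>j<?p - 1. of_nat (NN b (Suc j)) * ?z ^ Suc j)"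
    by (subst sum.lessThan_Suc_shift) simp
  also have "(\<Sum>j<?p - 1. of_nat (NN b (Suc j)) * ?z ^ Suc j) = of_nat (NN b 1) * (\<Sum>j<?p - 1. ?z ^ Suc j)"
    unfolding sum_distrib_left
  proof (intro sum.cong refl)
    fix j assume "j \<in> {..<CHAR('a) - 1}"
    hence "0 < Suc j" "Suc j < CHAR('a)" by auto
    from N_eq[OF this, of b] show "of_nat (NN b (Suc j)) * zz CHAR('a) ^ Suc j = of_nat (NN b 1) * zz CHAR('a) ^ Suc j"
      by (simp only: NN_def)
  qed
  also have "(\<Sum>j<?p - 1. ?z ^ Suc j) = -1"
  proof -
    have "(\<Sum>j<Suc (?p - 1). ?z ^ j) = 0" using zz_sum[OF p1] p1 by (simp del: sum.lessThan_Suc)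
    thus ?thesis by (subst (asm) sum.lessThan_Suc_shift) (simp add: eq_neg_iff_add_eq_0 add.commute)
  qed
  finally show ?thesis by simp
qed

lemma N_total: "NN b 0 + (CHAR('a) - 1) * NN b 1 = CARD('a)"
proof -
  let ?p = "CHAR('a)"
  have p1: "?p > 1" using ff_char_gt1[where 'a='a] .
  have "(\<Sum>x\<in>(UNIV::'a set). (\<lambda>_. 1::int) (ff_trace_nat (b*x + x^s))) = (\<Sum>j<?p. of_nat (NN b j) * 1)"
    unfolding NN_def by (rule sum_by_value) (rule ff_trace_nat)
  hence "int CARD('a) = (\<Sum>j<Suc (?p - 1). int (NN b j))" using p1 by (simp del: sum.lessThan_Suc)
  also have "\<dots> = int (NN b 0) + (\<Sum>j<?p - 1. int (NN b (Suc j)))" by (subst sum.lessThan_Suc_shift) simp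
  also have "(\<Sum>j<?p - 1. int (NN b (Suc j))) = (\<Sum>j<?p - 1. int (NN b 1))"
  proof (intro sum.cong refl)
    fix j assume "j \<in> {..<CHAR('a) - 1}"
    hence "0 < Suc j" "Suc j < CHAR('a)" by auto
    from N_eq[OF this, of b] show "int (NN b (Suc j)) = int (NN b 1)"
      by (simp only: NN_def)
  qed
  finally have "int CARD('a) = int (NN b 0) + int (?p - 1) * int (NN b 1)" by simp
  thus ?thesis by (metis of_nat_add of_nat_mult of_nat_eq_iff)
qed

end


lemma sum_inj_UNIV_gen:
  fixes h :: "'a::finite \<Rightarrow> 'a" and g :: "'a \<Rightarrow> 'b::comm_monoid_add"
  assumes "inj h"
  shows "(\<Sum>x\<in>UNIV. g (h x)) = (\<Sum>x\<in>UNIV. g x)"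
proof -
  have "surj h" using finite_UNIV_inj_surj[OF _ assms] by simp
  hence "(\<Sum>x\<in>UNIV. g x) = (\<Sum>x\<in>h ` UNIV. g x)" by simp
  also have "\<dots> = (\<Sum>x\<in>UNIV. g (h x))" using sum.reindex[OF assms, of g] by simp
  finally show ?thesis by simp
qed

lemma card_eq_sum_if: "card {x::'a::finite. P x} = (\<Sum>x\<in>UNIV. if P x then 1 else 0)"
proof -
  have "card {x::'a. P x} = (\<Sum>x\<in>{x\<in>UNIV. P x}. 1)" by simp
  also have "\<dots> = (\<Sum>x\<in>UNIV. if P x then 1 else 0)" by (rule sum.inter_filter) simp
  finally show ?thesis .
qed

locale pow_perm = pow_setup s TY for s and TY :: "'a::{field,finite} itself" +
  assumes cop: "coprime s (CARD('a) - 1)" and q2: "CARD('a) > 2"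
begin

abbreviation WW :: "'a \<Rightarrow> complex" where "WW b \<equiv> fourier_coeff (\<lambda>x. x ^ s) b"

lemma pw_inv: "\<exists>r. \<forall>x::'a. (x ^ s) ^ r = x"
proof -
  let ?q = "CARD('a)"
  obtain r where r: "[s * r = Suc 0] (mod (?q - 1))" using cong_solve_coprime_nat[OF cop] by blast
  have q1: "?q - 1 > 1" using q2 by simp
  have "s * r \<noteq> 0"
  proof
    assume "s * r = 0"
    with r have "[0 = Suc 0] (mod (?q - 1))" by simp
    thus False using q1 by (simp add: cong_def)
  qed
  hence "s * r \<ge> 1" by linarith
  hence "(?q - 1) dvd (s * r - 1)" using r by (simp add: cong_altdef_nat)
  then obtain m where m: "s * r - 1 = (?q - 1) * m" by blast
  have "(x ^ s) ^ r = x" for x :: 'a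
  proof (cases "x = 0")
    case True thus ?thesis using \<open>s * r \<ge> 1\<close> by (simp add: power_mult[symmetric] power_0_left)
  next
    case False
    have xq: "x ^ (?q - 1) = 1"
    proof -
      have "x * x ^ (?q - 1) = x ^ Suc (?q - 1)" by (simp only: power_Suc)
      also have "Suc (?q - 1) = ?q" using q2 by simp
      finally show ?thesis using ff_power_card[of x] False by simp
    qed
    have "(x ^ s) ^ r = x ^ Suc (s * r - 1)" using \<open>s * r \<ge> 1\<close> by (simp add: power_mult[symmetric])
    also have "\<dots> = x * (x ^ (?q - 1)) ^ m" by (simp only: power_Suc m power_mult)
    finally show ?thesis using xq by simp
  qed
  thus ?thesis by blast
qed

lemma pw_inj: "inj (\<lambda>x::'a. x ^ s)"
proof -
  obtain r where r: "\<forall>x::'a. (x ^ s) ^ r = x" using pw_inv by blast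
  show ?thesis by (rule inj_onI) (metis r)
qed

lemma pw_surj: "\<exists>t::'a. t ^ s = y"
  using finite_UNIV_inj_surj[OF _ pw_inj] by (metis finite surj_def)

lemma sum_pw: "(\<Sum>x\<in>UNIV. g (x ^ s :: 'a)) = (\<Sum>x\<in>UNIV. (g x :: complex))"
  using sum_inj_UNIV_gen[OF pw_inj, of g] by simp

lemma W0: "WW 0 = 0"
  unfolding fourier_coeff_def using sum_pw[of can_char] can_char_sum[where 'a='a] by simp

lemma Wsum: "(\<Sum>b\<in>UNIV. WW b) = of_nat CARD('a)"
proof -
  have "(\<Sum>b\<in>UNIV. WW b) = (\<Sum>b\<in>UNIV. \<Sum>x::'a\<in>UNIV. can_char (x ^ s) * can_char (x * b))"
  proof -
    have pt: "can_char (b * x + x ^ s) = can_char (x ^ s) * can_char (x * b)" for b x :: 'a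
      by (simp add: can_char_add[symmetric] mult.commute add.commute)
    show ?thesis unfolding fourier_coeff_def by (simp only: pt)
  qed
  also have "\<dots> = (\<Sum>x::'a\<in>UNIV. \<Sum>b\<in>UNIV. can_char (x ^ s) * can_char (x * b))" by (rule sum.swap)
  also have "\<dots> = (\<Sum>x::'a\<in>UNIV. can_char (x ^ s) * (if x = 0 then of_nat CARD('a) else 0))"
    by (simp add: sum_distrib_left[symmetric] can_char_orth)
  also have "\<dots> = can_char ((0::'a) ^ s) * of_nat CARD('a)"
    by (simp add: if_distrib cong: if_cong)
  finally show ?thesis using s_pos by (simp add: can_char_0 power_0_left)
qed

lemma g_nonzero: "(a::'a) ^ s + (1 - a) ^ s \<noteq> 0"
proof
  assume "a ^ s + (1 - a) ^ s = 0"
  hence "a ^ s = - ((1 - a) ^ s)" by (simp add: eq_neg_iff_add_eq_0)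
  also have "- ((1 - a) ^ s) = (-1) ^ s * (1 - a) ^ s" using neg1_pow_s[OF s_pos s_cong] by simp
  also have "\<dots> = (a - 1) ^ s" by (simp flip: power_mult_distrib)
  finally have "a = a - 1" using pw_inj by (simp add: inj_def)
  thus False by simp
qed

definition MM :: "'a \<Rightarrow> nat" where
  "MM t = card {a::'a. a ^ s + (1 - a) ^ s = inverse (t ^ s)}"

lemma MM_sum: "(\<Sum>t\<in>UNIV - {0::'a}. MM t) = CARD('a)"
proof -
  have one: "(\<Sum>t\<in>UNIV - {0::'a}. if a ^ s + (1 - a) ^ s = inverse (t ^ s) then 1 else 0) = (1::nat)" for a :: 'a
  proof -
    let ?v = "a ^ s + (1 - a) ^ s"
    obtain t0 :: 'a where t0: "t0 ^ s = inverse ?v" using pw_surj by blast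
    have "t0 \<noteq> 0"
    proof
      assume "t0 = 0"
      hence "inverse ?v = 0" by (metis t0 zero_power[OF s_pos])
      hence "?v = 0" by (metis inverse_inverse_eq inverse_zero)
      thus False using g_nonzero[of a] by simp
    qed
    have "{t \<in> UNIV - {0}. ?v = inverse (t ^ s)} = {t0}"
    proof (rule Set.set_eqI)
      fix t :: 'a
      show "t \<in> {t \<in> UNIV - {0}. ?v = inverse (t ^ s)} \<longleftrightarrow> t \<in> {t0}"
      proof
        assume "t \<in> {t \<in> UNIV - {0}. ?v = inverse (t ^ s)}"
        hence "t ^ s = inverse ?v" by auto
        hence "t ^ s = t0 ^ s" using t0 by simp
        thus "t \<in> {t0}" using pw_inj by (simp add: inj_def)
      next
        assume "t \<in> {t0}"
        thus "t \<in> {t \<in> UNIV - {0}. ?v = inverse (t ^ s)}" using t0 \<open>t0 \<noteq> 0\<close> by simp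
      qed
    qed
    hence "card {t \<in> UNIV - {0}. ?v = inverse (t ^ s)} = 1" by simp
    moreover have "card {t \<in> UNIV - {0}. ?v = inverse (t ^ s)} =
        (\<Sum>t\<in>UNIV - {0::'a}. if ?v = inverse (t ^ s) then 1 else 0)"
      by (simp add: sum.inter_filter[symmetric])
    ultimately show ?thesis by simp
  qed
  have "(\<Sum>t\<in>UNIV - {0::'a}. MM t) = (\<Sum>t\<in>UNIV - {0::'a}. \<Sum>a\<in>UNIV. if a ^ s + (1 - a) ^ s = inverse (t ^ s) then 1 else 0)"
    unfolding MM_def by (simp only: card_eq_sum_if)
  also have "\<dots> = (\<Sum>a\<in>UNIV. \<Sum>t\<in>UNIV - {0::'a}. if a ^ s + (1 - a) ^ s = inverse (t ^ s) then 1 else 0)"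
    by (rule sum.swap)
  also have "\<dots> = (\<Sum>a\<in>(UNIV::'a set). 1)" using one by simp
  finally show ?thesis by simp
qed

end


context pow_perm
begin

lemma G_eq:
  fixes u m :: 'a
  shows "(\<Sum>x::'a\<in>UNIV. can_char (x ^ s + (m - x) ^ s - u * m ^ s)) =
         (\<Sum>a::'a\<in>UNIV. can_char (m ^ s * (a ^ s + (1 - a) ^ s - u)))"
proof (cases "m = 0")
  case True
  have n1: "(-1::'a) ^ s = -1" by (rule neg1_pow_s[OF s_pos s_cong])
  have "(- x) ^ s = - (x ^ s)" for x :: 'a
  proof -
    have "(- x) ^ s = ((-1) * x) ^ s" by simp
    also have "\<dots> = - (x ^ s)" by (simp only: power_mult_distrib n1) simp
    finally show ?thesis .
  qed
  thus ?thesis using True s_pos by (simp add: zero_power)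
next
  case False
  have "(\<Sum>a::'a\<in>UNIV. can_char ((m * a) ^ s + (m - m * a) ^ s - u * m ^ s)) =
        (\<Sum>x::'a\<in>UNIV. can_char (x ^ s + (m - x) ^ s - u * m ^ s))"
    by (rule sum_inj_UNIV_gen) (use False in \<open>simp add: inj_def\<close>)
  moreover have "(m * a) ^ s + (m - m * a) ^ s - u * m ^ s = m ^ s * (a ^ s + (1 - a) ^ s - u)" for a :: 'a
  proof -
    have eq: "m - m * a = m * (1 - a)" by (simp add: algebra_simps)
    show ?thesis by (simp only: eq power_mult_distrib) (simp add: algebra_simps)
  qed
  ultimately show ?thesis by simp
qed

lemma inner_I:
  fixes u :: 'a
  shows "(\<Sum>x::'a\<in>UNIV. \<Sum>y::'a\<in>UNIV. can_char (x ^ s + y ^ s - u * (x + y) ^ s)) =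
         of_nat CARD('a) * of_nat (card {a::'a. a ^ s + (1 - a) ^ s = u})"
proof -
  have step1: "(\<Sum>y::'a\<in>UNIV. can_char (x ^ s + y ^ s - u * (x + y) ^ s)) =
               (\<Sum>m::'a\<in>UNIV. can_char (x ^ s + (m - x) ^ s - u * m ^ s))" for x :: 'a
  proof -
    have "(\<Sum>m::'a\<in>UNIV. (\<lambda>y. can_char (x ^ s + y ^ s - u * (x + y) ^ s)) (m - x)) =
          (\<Sum>y::'a\<in>UNIV. can_char (x ^ s + y ^ s - u * (x + y) ^ s))"
      by (rule sum_inj_UNIV_gen) (simp add: inj_def)
    thus ?thesis by simp
  qed
  have "(\<Sum>x::'a\<in>UNIV. \<Sum>y::'a\<in>UNIV. can_char (x ^ s + y ^ s - u * (x + y) ^ s)) =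
        (\<Sum>x::'a\<in>UNIV. \<Sum>m::'a\<in>UNIV. can_char (x ^ s + (m - x) ^ s - u * m ^ s))"
    using step1 by simp
  also have "\<dots> = (\<Sum>m::'a\<in>UNIV. \<Sum>x::'a\<in>UNIV. can_char (x ^ s + (m - x) ^ s - u * m ^ s))"
    by (rule sum.swap)
  also have "\<dots> = (\<Sum>m::'a\<in>UNIV. \<Sum>a::'a\<in>UNIV. can_char (m ^ s * (a ^ s + (1 - a) ^ s - u)))"
    using G_eq by simp
  also have "\<dots> = (\<Sum>a::'a\<in>UNIV. \<Sum>m::'a\<in>UNIV. can_char (m ^ s * (a ^ s + (1 - a) ^ s - u)))"
    by (rule sum.swap)
  also have "\<dots> = (\<Sum>a::'a\<in>UNIV. \<Sum>m::'a\<in>UNIV. can_char ((a ^ s + (1 - a) ^ s - u) * m))"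
  proof -
    have "(\<Sum>m::'a\<in>UNIV. can_char (m ^ s * (a ^ s + (1 - a) ^ s - u))) =
          (\<Sum>m::'a\<in>UNIV. can_char ((a ^ s + (1 - a) ^ s - u) * m))" for a :: 'a
      using sum_pw[of "\<lambda>m. can_char (m * (a ^ s + (1 - a) ^ s - u))"] by (simp add: mult.commute)
    thus ?thesis by simp
  qed
  also have "\<dots> = (\<Sum>a::'a\<in>UNIV. if a ^ s + (1 - a) ^ s - u = 0 then of_nat CARD('a) else 0)"
    by (simp only: can_char_orth)
  also have "\<dots> = of_nat CARD('a) * (\<Sum>a::'a\<in>UNIV. if a ^ s + (1 - a) ^ s = u then 1 else 0)"
    by (simp add: sum_distrib_left if_distrib cong: if_cong)
  also have "(\<Sum>a::'a\<in>UNIV. if a ^ s + (1 - a) ^ s = u then 1 else (0::complex)) =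
             of_nat (card {a::'a. a ^ s + (1 - a) ^ s = u})"
    by (simp add: card_eq_sum_if of_nat_sum if_distrib cong: if_cong)
  finally show ?thesis .
qed

lemma triple:
  fixes t :: 'a
  assumes t0: "t \<noteq> 0"
  shows "(\<Sum>b::'a\<in>UNIV. WW b * WW b * WW (t * b)) = of_nat (CARD('a) ^ 2 * MM t)"
proof -
  let ?q = "of_nat CARD('a) :: complex"
  let ?u = "inverse (t ^ s)"
  have pt: "can_char (b * x + x ^ s) * can_char (b * y + y ^ s) * can_char (t * b * z + z ^ s) =
            can_char (x ^ s + y ^ s + z ^ s) * can_char ((x + y + t * z) * b)" for b x y z :: 'a
  proof -
    have "can_char (b * x + x ^ s) * can_char (b * y + y ^ s) * can_char (t * b * z + z ^ s) =
          can_char ((b * x + x ^ s) + (b * y + y ^ s) + (t * b * z + z ^ s))"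
      by (simp only: can_char_add)
    also have "(b * x + x ^ s) + (b * y + y ^ s) + (t * b * z + z ^ s) =
               (x ^ s + y ^ s + z ^ s) + (x + y + t * z) * b" by (simp add: algebra_simps)
    also have "can_char \<dots> = can_char (x ^ s + y ^ s + z ^ s) * can_char ((x + y + t * z) * b)"
      by (rule can_char_add)
    finally show ?thesis .
  qed
  have e1: "WW b * WW b * WW (t * b) =
        (\<Sum>x::'a\<in>UNIV. \<Sum>y::'a\<in>UNIV. \<Sum>z::'a\<in>UNIV. can_char (x ^ s + y ^ s + z ^ s) * can_char ((x + y + t * z) * b))"
    for b :: 'a
  proof -
    have "WW b * WW b = (\<Sum>x::'a\<in>UNIV. \<Sum>y::'a\<in>UNIV. can_char (b * x + x ^ s) * can_char (b * y + y ^ s))"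
      unfolding fourier_coeff_def by (rule sum_product)
    hence "WW b * WW b * WW (t * b) = (\<Sum>x::'a\<in>UNIV. \<Sum>y::'a\<in>UNIV. can_char (b * x + x ^ s) * can_char (b * y + y ^ s)) *
            (\<Sum>z::'a\<in>UNIV. can_char (t * b * z + z ^ s))"
      unfolding fourier_coeff_def by simp
    also have "\<dots> = (\<Sum>x::'a\<in>UNIV. \<Sum>y::'a\<in>UNIV. \<Sum>z::'a\<in>UNIV.
        can_char (b * x + x ^ s) * can_char (b * y + y ^ s) * can_char (t * b * z + z ^ s))"
      by (simp only: sum_distrib_right) (simp only: sum_distrib_left)
    finally show ?thesis by (simp only: pt)
  qed
  have "(\<Sum>b::'a\<in>UNIV. WW b * WW b * WW (t * b)) =
        (\<Sum>b::'a\<in>UNIV. \<Sum>x::'a\<in>UNIV. \<Sum>y::'a\<in>UNIV. \<Sum>z::'a\<in>UNIV. can_char (x ^ s + y ^ s + z ^ s) * can_char ((x + y + t * z) * b))"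
    using e1 by simp
  also have "\<dots> = (\<Sum>x::'a\<in>UNIV. \<Sum>b::'a\<in>UNIV. \<Sum>y::'a\<in>UNIV. \<Sum>z::'a\<in>UNIV. can_char (x ^ s + y ^ s + z ^ s) * can_char ((x + y + t * z) * b))"
    by (rule sum.swap)
  also have "\<dots> = (\<Sum>x::'a\<in>UNIV. \<Sum>y::'a\<in>UNIV. \<Sum>b::'a\<in>UNIV. \<Sum>z::'a\<in>UNIV. can_char (x ^ s + y ^ s + z ^ s) * can_char ((x + y + t * z) * b))"
    by (intro sum.cong refl sum.swap)
  also have "\<dots> = (\<Sum>x::'a\<in>UNIV. \<Sum>y::'a\<in>UNIV. \<Sum>z::'a\<in>UNIV. \<Sum>b::'a\<in>UNIV. can_char (x ^ s + y ^ s + z ^ s) * can_char ((x + y + t * z) * b))"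
    by (intro sum.cong refl sum.swap)
  also have "\<dots> = (\<Sum>x::'a\<in>UNIV. \<Sum>y::'a\<in>UNIV. \<Sum>z::'a\<in>UNIV. can_char (x ^ s + y ^ s + z ^ s) * (if x + y + t * z = 0 then ?q else 0))"
    by (simp only: sum_distrib_left[symmetric] can_char_orth)
  also have "\<dots> = (\<Sum>x::'a\<in>UNIV. \<Sum>y::'a\<in>UNIV. ?q * can_char (x ^ s + y ^ s - ?u * (x + y) ^ s))"
  proof (intro sum.cong refl)
    fix x y :: 'a
    let ?z0 = "- (x + y) / t"
    have iff: "x + y + t * z = 0 \<longleftrightarrow> z = ?z0" for z :: 'a
    proof -
      have "x + y + t * z = 0 \<longleftrightarrow> t * z = - (x + y)" by (metis add.commute eq_neg_iff_add_eq_0)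
      also have "\<dots> \<longleftrightarrow> z = ?z0" using t0 by (auto simp: field_simps)
      finally show ?thesis .
    qed
    have "(\<Sum>z::'a\<in>UNIV. can_char (x ^ s + y ^ s + z ^ s) * (if x + y + t * z = 0 then ?q else 0)) =
          (\<Sum>z::'a\<in>UNIV. if z = ?z0 then ?q * can_char (x ^ s + y ^ s + z ^ s) else 0)"
      by (intro sum.cong refl) (simp add: iff)
    also have "\<dots> = ?q * can_char (x ^ s + y ^ s + ?z0 ^ s)" by (simp add: sum.delta')
    also have "?z0 ^ s = - (?u * (x + y) ^ s)"
    proof -
      have eqz: "?z0 = (-1) * (x + y) * inverse t" by (simp add: field_simps)
      have "?z0 ^ s = ((-1) * (x + y) * inverse t) ^ s" by (simp only: eqz)
      also have "\<dots> = (-1) ^ s * (x + y) ^ s * inverse t ^ s" by (simp only: power_mult_distrib)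
      also have "(-1::'a) ^ s = -1" by (rule neg1_pow_s[OF s_pos s_cong])
      also have "inverse t ^ s = ?u" by (simp add: power_inverse)
      finally show ?thesis by (simp add: algebra_simps)
    qed
    finally show "(\<Sum>z::'a\<in>UNIV. can_char (x ^ s + y ^ s + z ^ s) * (if x + y + t * z = 0 then ?q else 0)) =
          ?q * can_char (x ^ s + y ^ s - ?u * (x + y) ^ s)" by simp
  qed
  also have "\<dots> = ?q * (\<Sum>x::'a\<in>UNIV. \<Sum>y::'a\<in>UNIV. can_char (x ^ s + y ^ s - ?u * (x + y) ^ s))"
    by (simp add: sum_distrib_left)
  also have "\<dots> = ?q * (?q * of_nat (MM t))"
    unfolding inner_I MM_def ..
  finally show ?thesis by (simp add: power2_eq_square)
qed

end


lemma int_sq_mod3: "\<not> (3::int) dvd w \<Longrightarrow> (w * w) mod 3 = 1"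
proof -
  assume h: "\<not> (3::int) dvd w"
  have "w mod 3 = 1 \<or> w mod 3 = 2" using h by (auto simp: dvd_eq_mod_eq_0)
  moreover have "(w * w) mod 3 = ((w mod 3) * (w mod 3)) mod 3" by (simp add: mod_mult_eq)
  ultimately show ?thesis by auto
qed

lemma mod_sum_eq_pointwise:
  fixes f g :: "'b \<Rightarrow> int"
  assumes "\<And>i. i \<in> A \<Longrightarrow> f i mod m = g i mod m"
  shows "sum f A mod m = sum g A mod m"
proof -
  have "sum f A mod m = (\<Sum>i\<in>A. f i mod m) mod m" by (simp add: mod_sum_eq)
  also have "(\<Sum>i\<in>A. f i mod m) = (\<Sum>i\<in>A. g i mod m)" by (rule sum.cong) (use assms in auto)
  also have "(\<Sum>i\<in>A. g i mod m) mod m = sum g A mod m" by (simp add: mod_sum_eq)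
  finally show ?thesis .
qed

lemma prime3: "prime (3::nat)"
proof -
  have "m = 1 \<or> m = 3" if "m dvd 3" for m :: nat
  proof -
    have "m \<le> 3" using that by (rule dvd_imp_le) simp
    have "m \<noteq> 0" using that by (metis dvd_0_left_iff zero_neq_numeral)
    have "m = 1 \<or> m = 2 \<or> m = 3" using \<open>m \<le> 3\<close> \<open>m \<noteq> 0\<close> by presburger
    moreover have "m \<noteq> 2" using that by auto
    ultimately show ?thesis by blast
  qed
  thus ?thesis by (auto simp: prime_nat_iff)
qed

context pow_perm
begin

definition ww :: "'a \<Rightarrow> int" where "ww b = int (NN b 0) - int (NN b 1)"

lemma WW_ww: "WW b = of_int (ww b)"
  unfolding ww_def by (rule W_int)

lemma ww0: "ww 0 = 0"
  using W0 unfolding WW_ww by simp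

lemma wwsum: "(\<Sum>b::'a\<in>UNIV. ww b) = int CARD('a)"
proof -
  have "(of_int (\<Sum>b::'a\<in>UNIV. ww b) :: complex) = of_int (int CARD('a))"
    using Wsum unfolding WW_ww by simp
  thus ?thesis by (simp only: of_int_eq_iff)
qed

lemma wwtriple: "t \<noteq> 0 \<Longrightarrow> (\<Sum>b::'a\<in>UNIV. ww b * ww b * ww (t * b)) = int (CARD('a) ^ 2 * MM t)"
proof -
  assume "t \<noteq> 0"
  have "(of_int (\<Sum>b::'a\<in>UNIV. ww b * ww b * ww (t * b)) :: complex) = of_int (int (CARD('a) ^ 2 * MM t))"
    using triple[OF \<open>t \<noteq> 0\<close>] unfolding WW_ww by simp
  thus ?thesis by (simp only: of_int_eq_iff)
qed

lemma exists3: "\<exists>b::'a. b \<noteq> 0 \<and> (3::int) dvd ww b"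
proof (cases "(3::nat) dvd CARD('a)")
  case True
  have "CHAR('a) = 3"
  proof -
    have "3 dvd CHAR('a) ^ ff_degree TYPE('a)" using True ff_degree_eq[where 'a='a] by simp
    hence "3 dvd CHAR('a)" using prime_dvd_power_iff[OF prime3 ff_degree_pos[where 'a='a]] by simp
    moreover have "\<forall>m. m dvd CHAR('a) \<longrightarrow> m = 1 \<or> m = CHAR('a)"
      using prime_nat_iff[THEN iffD1, OF ff_char_prime[where 'a='a]] by (rule conjunct2)
    ultimately have "(3::nat) = 1 \<or> 3 = CHAR('a)" by (metis)
    thus ?thesis by simp
  qed
  hence "NN 1 0 + 2 * NN 1 1 = CARD('a)" using N_total[of 1] by simp
  hence "ww 1 = int CARD('a) - 3 * int (NN 1 1)" unfolding ww_def by linarith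
  moreover have "(3::int) dvd int CARD('a)" using True by presburger
  ultimately have "(3::int) dvd ww 1" by simp
  thus ?thesis by (intro exI[of _ 1]) simp
next
  case False
  let ?q = "int CARD('a)"
  show ?thesis
  proof (rule ccontr)
    assume "\<not> ?thesis"
    hence H: "\<And>b. b \<noteq> 0 \<Longrightarrow> \<not> (3::int) dvd ww b" by blast
    have q3: "?q mod 3 = 1 \<or> ?q mod 3 = 2" using False by presburger
    have sq: "(?q * ?q) mod 3 = 1" using False by (intro int_sq_mod3) presburger
    have Mmod: "int (MM t) mod 3 = ?q mod 3" if "t \<noteq> 0" for t :: 'a
    proof -
      have "(\<Sum>b::'a\<in>UNIV. ww b * ww b * ww (t * b)) mod 3 = (\<Sum>b::'a\<in>UNIV. ww (t * b)) mod 3"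
      proof (rule mod_sum_eq_pointwise)
        fix b :: 'a
        assume "b \<in> UNIV"
        show "(ww b * ww b * ww (t * b)) mod 3 = ww (t * b) mod 3"
        proof (cases "b = 0")
          case True thus ?thesis using ww0 by simp
        next
          case False
          have "(ww b * ww b * ww (t * b)) mod 3 = (((ww b * ww b) mod 3) * ww (t * b)) mod 3"
            by (simp add: mod_mult_left_eq)
          also have "(ww b * ww b) mod 3 = 1" using H[OF False] by (rule int_sq_mod3)
          finally show ?thesis by simp
        qed
      qed
      also have "(\<Sum>b::'a\<in>UNIV. ww (t * b)) = (\<Sum>b::'a\<in>UNIV. ww b)"
        by (rule sum_inj_UNIV_gen) (use that in \<open>simp add: inj_def\<close>)
      finally have "int (CARD('a) ^ 2 * MM t) mod 3 = ?q mod 3" using wwtriple[OF that] wwsum by simp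
      hence "((?q * ?q) * int (MM t)) mod 3 = ?q mod 3" by (simp add: power2_eq_square)
      moreover have "((?q * ?q) * int (MM t)) mod 3 = (((?q * ?q) mod 3) * int (MM t)) mod 3"
        by (simp add: mod_mult_left_eq)
      ultimately show ?thesis using sq by simp
    qed
    have tot: "(\<Sum>t\<in>UNIV - {0::'a}. int (MM t)) = ?q" using MM_sum by (simp flip: of_nat_sum)
    have cardm: "card (UNIV - {0::'a}) = CARD('a) - 1" by (simp add: card_Diff_singleton)
    have "(\<Sum>t\<in>UNIV - {0::'a}. int (MM t)) mod 3 = (\<Sum>t\<in>UNIV - {0::'a}. ?q) mod 3"
      by (rule mod_sum_eq_pointwise) (use Mmod in auto)
    hence "?q mod 3 = (int (CARD('a) - 1) * ?q) mod 3" using tot cardm by simp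
    hence qq: "?q mod 3 = ((?q - 1) * ?q) mod 3" using q2 by (simp add: of_nat_diff)
    have q32: "?q mod 3 = 2"
    proof (rule ccontr)
      assume "?q mod 3 \<noteq> 2"
      hence q1: "?q mod 3 = 1" using q3 by simp
      hence "3 dvd (?q - 1)" by presburger
      hence "((?q - 1) * ?q) mod 3 = 0" by simp
      with qq q1 show False by simp
    qed
    have "2 \<le> MM t" if "t \<in> UNIV - {0::'a}" for t
    proof -
      have "int (MM t) mod 3 = 2" using Mmod[of t] that q32 by simp
      thus ?thesis by presburger
    qed
    hence "card (UNIV - {0::'a}) * 2 \<le> (\<Sum>t\<in>UNIV - {0::'a}. MM t)"
      using sum_bounded_below[of "UNIV - {0::'a}" 2 MM] by simp
    hence "(CARD('a) - 1) * 2 \<le> CARD('a)" using MM_sum cardm by simp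
    thus False using q2 by linarith
  qed
qed

end

theorem mainTheorem3:
  fixes s :: nat
  assumes "CARD('a::{field,finite}) > 2"
    and "s > 0"
    and "[s = 1] (mod (CHAR('a) - 1))"
    and "coprime s (CARD('a) - 1)"
  shows "\<exists>k::int. frakD (\<lambda>x::'a. x ^ s) = of_int (3 * k)"
proof -
  interpret pow_perm s "TYPE('a)"
    by unfold_locales (use assms in auto)
  obtain b0 :: 'a where b0: "b0 \<noteq> 0" "(3::int) dvd ww b0" using exists3 by blast
  have "frakD (\<lambda>x::'a. x ^ s) = (\<Prod>a\<in>UNIV - {0::'a}. of_int (ww a))"
    unfolding frakD_def WW_ww ..
  also have "\<dots> = of_int (\<Prod>a\<in>UNIV - {0::'a}. ww a)" by simp
  finally have eq: "frakD (\<lambda>x::'a. x ^ s) = of_int (\<Prod>a\<in>UNIV - {0::'a}. ww a)" .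
  have "(3::int) dvd (\<Prod>a\<in>UNIV - {0::'a}. ww a)"
    using dvd_trans[OF b0(2) dvd_prodI[of "UNIV - {0::'a}" b0 ww]] b0(1) by simp
  then obtain k where "(\<Prod>a\<in>UNIV - {0::'a}. ww a) = 3 * k" by blast
  thus ?thesis using eq by auto
qed


end
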